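(* There is an absolute constant $c>0$ such that for every input $(A,W,k)$ of the Randomized Algorithm (with $A\in\mathbb{R}^{d\times d}$, $W\succeq0$, $k$ a positive integer), the set $S=\{i\in[d]:\epsilon_i=1\}$ formed by the algorithm satisfies $\mathbb P(|S|\le k)\ge1-\exp\{-ck\}$.
   Context: Randomized Algorithm (input $A$, PSD $W$, positive integer $k$): set $a_i=\sqrt{W_{ii}}$, $p_i=\min\{1,\ \tfrac23 ka_i/\sum_{j=1}^da_j+\tfrac1{12}kA_{ii}/\mathrm{tr}(A)\}$, and sample independently $\epsilon_i\in\{0,1\}$ with $\mathbb P(\epsilon_i=1)=p_i$; $S:=\{i:\epsilon_i=1\}$ (before any subsequent augmentation step). *)

theory Defs
  imports "HOL-Probability.Probability"
begin

text \<open>d x d real matrices are represented as functions nat => nat => real,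
  only the entries with indices below d being relevant.\<close>

definition psd_mat :: "nat \<Rightarrow> (nat \<Rightarrow> nat \<Rightarrow> real) \<Rightarrow> bool" where
  "psd_mat d W \<longleftrightarrow> (\<forall>i<d. \<forall>j<d. W i j = W j i) \<and>
     (\<forall>x :: nat \<Rightarrow> real. 0 \<le> (\<Sum>i<d. \<Sum>j<d. x i * W i j * x j))"

definition mat_trace :: "nat \<Rightarrow> (nat \<Rightarrow> nat \<Rightarrow> real) \<Rightarrow> real" where
  "mat_trace d A = (\<Sum>i<d. A i i)"

definition alg_p :: "nat \<Rightarrow> (nat \<Rightarrow> nat \<Rightarrow> real) \<Rightarrow> (nat \<Rightarrow> nat \<Rightarrow> real) \<Rightarrow> nat \<Rightarrow> nat \<Rightarrow> real" where
  "alg_p d A W k i = min 1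
     (2/3 * real k * sqrt (W i i) / (\<Sum>j<d. sqrt (W j j))
      + 1/12 * real k * A i i / mat_trace d A)"

definition alg_eps :: "nat \<Rightarrow> (nat \<Rightarrow> nat \<Rightarrow> real) \<Rightarrow> (nat \<Rightarrow> nat \<Rightarrow> real) \<Rightarrow> nat \<Rightarrow> (nat \<Rightarrow> bool) pmf" where
  "alg_eps d A W k = Pi_pmf {..<d} False (\<lambda>i. bernoulli_pmf (alg_p d A W k i))"

definition alg_S :: "nat \<Rightarrow> (nat \<Rightarrow> bool) \<Rightarrow> nat set" where
  "alg_S d \<epsilon> = {i\<in>{..<d}. \<epsilon> i}"

end

theory Submission
  imports Defs
begin

lemma exp_38_lt: "exp (3/8::real) < 3/2"
proof -
  have "1 + (-1/8::real) \<le> exp (-1/8)" by (rule exp_ge_add_one_self)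
  hence "exp (1/8::real) \<le> 8/7"
    by (simp add: exp_minus field_simps)
  hence "exp (1/8::real) ^ 3 \<le> (8/7) ^ 3"
    by (intro power_mono) auto
  moreover have "exp (1/8::real) ^ 3 = exp (3/8)"
    by (subst exp_of_nat_mult [symmetric]) simp
  ultimately have "exp (3/8::real) \<le> (8/7)^3" by simp
  also have "(8/7::real)^3 < 3/2" by (simp add: power3_eq_cube)
  finally show ?thesis .
qed

lemma c_pos: "0 < ln (3/2::real) - 3/8"
proof -
  have "3/8 < ln (3/2::real)"
    using exp_38_lt by (metis exp_gt_zero ln_exp ln_strict_mono)
  thus ?thesis by simp
qed

lemma psd_diag: "psd_mat d W \<Longrightarrow> i < d \<Longrightarrow> 0 \<le> W i i"
proof -
  assume P: "psd_mat d W" and i: "i < d"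
  define x where "x = (\<lambda>j. if j = i then 1 else (0::real))"
  have "0 \<le> (\<Sum>a<d. \<Sum>b<d. x a * W a b * x b)" using P unfolding psd_mat_def by blast
  also have "\<dots> = W i i" using i unfolding x_def
    by (simp add: if_distrib[of "\<lambda>c. c * _"] if_distrib[of "\<lambda>c. _ * c"] sum.delta cong: if_cong)
  finally show ?thesis .
qed

lemma alg_p_bounds:
  assumes "psd_mat d W" "\<forall>i<d. 0 \<le> A i i" "i < d"
  shows "0 \<le> alg_p d A W k i \<and> alg_p d A W k i \<le> 1"
proof -
  have s: "0 \<le> (\<Sum>j<d. sqrt (W j j))" by (intro sum_nonneg) (use assms psd_diag in auto)
  have t: "0 \<le> mat_trace d A" unfolding mat_trace_def using assms(2) by (intro sum_nonneg) auto
  have "0 \<le> 2/3 * real k * sqrt (W i i) / (\<Sum>j<d. sqrt (W j j))"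
    using s psd_diag[OF assms(1,3)] by simp
  moreover have "0 \<le> 1/12 * real k * A i i / mat_trace d A" using t assms by simp
  ultimately show ?thesis unfolding alg_p_def by simp
qed

lemma alg_p_sum:
  assumes "psd_mat d W" "\<forall>i<d. 0 \<le> A i i"
  shows "(\<Sum>i<d. alg_p d A W k i) \<le> 3/4 * real k"
proof -
  define S where "S = (\<Sum>j<d. sqrt (W j j))"
  define T where "T = mat_trace d A"
  have "(\<Sum>i<d. alg_p d A W k i) \<le> (\<Sum>i<d. 2/3 * real k * sqrt (W i i) / S + 1/12 * real k * A i i / T)"
    unfolding alg_p_def S_def T_def by (intro sum_mono) simp
  also have "\<dots> = 2/3 * real k * (S / S) + 1/12 * real k * (T / T)"
    unfolding sum.distrib S_def T_def mat_trace_def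
    by (simp add: sum_divide_distrib[symmetric] sum_distrib_left[symmetric] mult.assoc)
  also have "\<dots> \<le> 2/3 * real k + 1/12 * real k"
    by (intro add_mono mult_left_mono) (auto simp: divide_le_eq_1)
  finally show ?thesis by simp
qed

lemma prod_if_card: "finite B \<Longrightarrow> (\<Prod>i\<in>B. if P i then (t::real) else 1) = t ^ card {i\<in>B. P i}"
  by (simp add: prod.If_cases Int_def)

theorem proposition5:
  "\<exists>c>0. \<forall>(d::nat) (A::nat \<Rightarrow> nat \<Rightarrow> real) (W::nat \<Rightarrow> nat \<Rightarrow> real) (k::nat).
     psd_mat d W \<longrightarrow> (\<forall>i<d. 0 \<le> A i i) \<longrightarrow> 0 < k \<longrightarrow>
     measure_pmf.prob (alg_eps d A W k) {\<epsilon>. card (alg_S d \<epsilon>) \<le> k}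
       \<ge> 1 - exp (- c * real k)"
proof (intro exI[of _ "ln (3/2) - 3/8"] conjI allI impI)
  show "0 < ln (3/2::real) - 3/8" by (rule c_pos)
  fix d k :: nat and A W :: "nat \<Rightarrow> nat \<Rightarrow> real"
  assume W: "psd_mat d W" and A: "\<forall>i<d. 0 \<le> A i i" and k: "0 < k"
  define M where "M = alg_eps d A W k"
  define p where "p = alg_p d A W k"
  have pb: "\<And>i. i < d \<Longrightarrow> 0 \<le> p i \<and> p i \<le> 1" unfolding p_def using alg_p_bounds W A by blast
  define f where "f = (\<lambda>(i::nat) (v::bool). if v then (3/2::real) else 1)"
  define u where "u = (\<lambda>\<epsilon>. \<Prod>i<d. f i (\<epsilon> i))"
  have u_eq: "u \<epsilon> = (3/2) ^ card (alg_S d \<epsilon>)" for \<epsilon>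
    unfolding u_def f_def alg_S_def by (rule prod_if_card) simp
  have int: "integrable (measure_pmf M) u"
    unfolding u_def M_def alg_eps_def
    by (intro integrable_prod_Pi_pmf) (auto intro: integrable_measure_pmf_finite)
  have Eu: "measure_pmf.expectation M u = (\<Prod>i<d. 1 + p i / 2)"
    unfolding u_def M_def alg_eps_def
    apply (subst expectation_prod_Pi_pmf)
    apply (auto intro: integrable_measure_pmf_finite simp: f_def)[3]
    apply (intro prod.cong refl)
    using pb by (simp add: p_def f_def algebra_simps)
  also have "\<dots> \<le> (\<Prod>i<d. exp (p i / 2))"
    by (intro prod_mono) (use pb exp_ge_add_one_self in \<open>auto simp: add.commute[of 1]\<close>)
  also have "\<dots> = exp ((\<Sum>i<d. p i) / 2)"
    by (simp add: exp_sum sum_divide_distrib)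
  also have "\<dots> \<le> exp (3/8 * real k)"
    using alg_p_sum[of d W A k, OF W A] unfolding p_def by simp
  finally have Eu_le: "measure_pmf.expectation M u \<le> exp (3/8 * real k)" .
  have bad: "measure_pmf.prob M {\<epsilon>. \<not> card (alg_S d \<epsilon>) \<le> k} \<le> exp (- (ln (3/2) - 3/8) * real k)"
  proof -
    have "{\<epsilon>. \<not> card (alg_S d \<epsilon>) \<le> k} = {x \<in> space (measure_pmf M). u x \<ge> (3/2) ^ (k+1)}"
    proof -
      have "((3/2::real) ^ (k+1) \<le> (3/2) ^ n) = (k+1 \<le> n)" for n
        by (rule power_increasing_iff) simp
      thus ?thesis by (auto simp: u_eq not_le Suc_le_eq simp del: power_Suc)
    qed
    hence "measure_pmf.prob M {\<epsilon>. \<not> card (alg_S d \<epsilon>) \<le> k}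
        \<le> measure_pmf.expectation M u / (3/2) ^ (k+1)"
      by (simp only:) (rule integral_Markov_inequality_measure[OF int, of UNIV],
           auto simp: u_eq)
    also have "\<dots> \<le> exp (3/8 * real k) / (3/2) ^ k"
      by (intro frac_le Eu_le) (auto intro!: integral_nonneg_AE simp: u_eq)
    also have "(3/2::real) ^ k = exp (ln (3/2) * real k)"
      by (simp add: mult.commute[of "ln _"] exp_of_nat_mult)
    also have "exp (3/8 * real k) / \<dots> = exp (- (ln (3/2) - 3/8) * real k)"
      by (simp add: exp_diff[symmetric] algebra_simps)
    finally show ?thesis .
  qed
  have "measure_pmf.prob M {\<epsilon>. card (alg_S d \<epsilon>) \<le> k} = 1 - measure_pmf.prob M {\<epsilon>. \<not> card (alg_S d \<epsilon>) \<le> k}"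
    using measure_pmf.prob_compl[of "{\<epsilon>. card (alg_S d \<epsilon>) \<le> k}" M]
    by (simp add: Compl_eq_Diff_UNIV[symmetric] Collect_neg_eq)
  with bad show "measure_pmf.prob (alg_eps d A W k) {\<epsilon>. card (alg_S d \<epsilon>) \<le> k} \<ge> 1 - exp (- (ln (3/2) - 3/8) * real k)"
    unfolding M_def by simp
qed

end
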